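(* Let $d>r\ge1$, $w=(w_1,\dots,w_r)$ a generalized partition of length $r$, and $u$ a partition with $u_1\le d-r$ and length at most $r$, such that $\mathcal D(\chi(u))\subset\mathcal D(w)$ (so $w/\chi(u)$ is a skew partition) and $(w,\tilde u)$ is admissible. Let $\Sigma=\mathcal D(w/\chi(u))$ and $$\Sigma_\pm=\{(i,j)\in\Sigma:\ \tilde u_{1-j}-(r+1-j)\gtrless w_i-i\},$$ with the convention $\tilde u_k=+\infty$ for $k\le0$ (so $\Sigma=\Sigma_+\cup\Sigma_-$). Define $s_+,s_-$ by $(s_+)_i=w_i+\operatorname{card}\{j\in\{1,..,d-r\}: w_i-i<\tilde u_j-(r+j)\}$ and $(s_-)_j=\tilde u_j-\operatorname{card}\{i\in\{1,..,r\}: w_i-i<\tilde u_j-(r+j)\}$. Then (i) $s_+=[\Sigma_+]$; (ii) $s_-=\langle\chi^*(\Sigma_-)\rangle$; (iii) $i(w,\tilde u)=|u|-\operatorname{card}(\Sigma_-)$.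
   Context: A generalized partition of length $r$ is a weakly decreasing sequence of $r$ integers, with diagram $\mathcal D(u)=\{(i,j)\in\{1,..,r\}\times\mathbb Z: j\le u_i\}$; $\mathcal D(w/u)=\mathcal D(w)\setminus\mathcal D(u)$. For a partition $u=(u_1,\dots,u_r)$ (padded with zeros to length $r$), $\chi(u)=(-u_r,\dots,-u_1)$, and $\chi^*(i,j)=(r+1-i,1-j)$. $\tilde u$ is the transpose of $u$, regarded as $(\tilde u_1,\dots,\tilde u_{d-r})$. For a finite set $S$ of pairs, $[S]_i=\operatorname{card}\{j:(i,j)\in S\}$ and $\langle S\rangle_j=\operatorname{card}\{i:(i,j)\in S\}$. For $a=(w,\tilde u)\in\mathbb Z^d$ and $I(d)=(1,\dots,d)$: $a$ is admissible iff the entries of $a-I(d)$ are pairwise distinct, and $i(a)=\operatorname{card}\{(i,j):i<j,\ (a-I(d))_i<(a-I(d))_j\}$; $i(w,\tilde u)=i(a)$. $|u|=\sum u_i$. *)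

theory Defs
  imports Main "HOL-Library.Extended_Real"
begin

definition gen_partition :: "nat \<Rightarrow> (nat \<Rightarrow> int) \<Rightarrow> bool" where
  "gen_partition r w \<longleftrightarrow> (\<forall>i j. 1 \<le> i \<longrightarrow> i \<le> j \<longrightarrow> j \<le> r \<longrightarrow> w j \<le> w i)"

text \<open>Partition of length at most r, padded with zeros to length r (entries u 1..u r).\<close>
definition partition_le :: "nat \<Rightarrow> (nat \<Rightarrow> nat) \<Rightarrow> bool" where
  "partition_le r u \<longleftrightarrow> (\<forall>i j. 1 \<le> i \<longrightarrow> i \<le> j \<longrightarrow> j \<le> r \<longrightarrow> u j \<le> u i)"

definition diagram :: "nat \<Rightarrow> (nat \<Rightarrow> int) \<Rightarrow> (nat \<times> int) set" where
  "diagram r u = {(i, j). 1 \<le> i \<and> i \<le> r \<and> j \<le> u i}"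

definition skew_diagram :: "nat \<Rightarrow> (nat \<Rightarrow> int) \<Rightarrow> (nat \<Rightarrow> int) \<Rightarrow> (nat \<times> int) set" where
  "skew_diagram r w u = diagram r w - diagram r u"

definition chi :: "nat \<Rightarrow> (nat \<Rightarrow> nat) \<Rightarrow> nat \<Rightarrow> int" where
  "chi r u i = - int (u (r + 1 - i))"

definition chi_star :: "nat \<Rightarrow> nat \<times> int \<Rightarrow> nat \<times> int" where
  "chi_star r c = (r + 1 - fst c, 1 - snd c)"

definition transpose_part :: "nat \<Rightarrow> (nat \<Rightarrow> nat) \<Rightarrow> nat \<Rightarrow> nat" where
  "transpose_part r u j = card {i. 1 \<le> i \<and> i \<le> r \<and> j \<le> u i}"

definition transpose_ext :: "nat \<Rightarrow> (nat \<Rightarrow> nat) \<Rightarrow> int \<Rightarrow> ereal" where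
  "transpose_ext r u k = (if k \<le> 0 then PInfty else ereal (of_nat (transpose_part r u (nat k))))"

definition row_count :: "(nat \<times> int) set \<Rightarrow> nat \<Rightarrow> nat" where
  "row_count S i = card {j. (i, j) \<in> S}"

definition col_count :: "(nat \<times> int) set \<Rightarrow> int \<Rightarrow> nat" where
  "col_count S j = card {i. (i, j) \<in> S}"

definition concat_seq :: "nat \<Rightarrow> (nat \<Rightarrow> int) \<Rightarrow> (nat \<Rightarrow> nat) \<Rightarrow> nat \<Rightarrow> int" where
  "concat_seq r w ut k = (if k \<le> r then w k else int (ut (k - r)))"

definition admissible :: "nat \<Rightarrow> (nat \<Rightarrow> int) \<Rightarrow> bool" where
  "admissible d a \<longleftrightarrow> inj_on (\<lambda>k. a k - int k) {1..d}"

definition inv_count :: "nat \<Rightarrow> (nat \<Rightarrow> int) \<Rightarrow> nat" where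
  "inv_count d a = card {(i, j). 1 \<le> i \<and> i < j \<and> j \<le> d \<and> a i - int i < a j - int j}"

end

theory Submission
  imports Defs
begin

lemma init_seg:
  fixes S :: "nat set"
  assumes "finite S" "0 \<notin> S" "\<And>k k'. k \<in> S \<Longrightarrow> 1 \<le> k' \<Longrightarrow> k' \<le> k \<Longrightarrow> k' \<in> S"
  shows "S = {1..card S}"
proof (cases "S = {}")
  case True thus ?thesis by simp
next
  case False
  define M where "M = Max S"
  have M: "M \<in> S" using assms(1) False by (simp add: M_def)
  have "S = {1..M}"
  proof
    show "S \<subseteq> {1..M}" using assms(1,2) M_def
      by (metis Max_ge atLeastAtMost_iff less_one linorder_not_le subsetI)
    show "{1..M} \<subseteq> S" using assms(3) M by auto
  qed
  then show ?thesis by simp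
qed

lemma ut_le: "transpose_part r u k \<le> r"
proof -
  have "{i. 1 \<le> i \<and> i \<le> r \<and> k \<le> u i} \<subseteq> {1..r}" by auto
  then have "card {i. 1 \<le> i \<and> i \<le> r \<and> k \<le> u i} \<le> card {1..r}" by (intro card_mono) auto
  then show ?thesis by (simp add: transpose_part_def)
qed

lemma ut_anti: "k \<le> k' \<Longrightarrow> transpose_part r u k' \<le> transpose_part r u k"
  unfolding transpose_part_def by (intro card_mono) auto

lemma ut_char:
  assumes "partition_le r u" "1 \<le> i" "i \<le> r"
  shows "(k \<le> u i) = (i \<le> transpose_part r u k)"
proof
  assume k: "k \<le> u i"
  have "{1..i} \<subseteq> {i. 1 \<le> i \<and> i \<le> r \<and> k \<le> u i}"
  proof
    fix x assume "x \<in> {1..i}"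
    then show "x \<in> {i. 1 \<le> i \<and> i \<le> r \<and> k \<le> u i}"
      using assms k unfolding partition_le_def by (auto intro: order.trans)
  qed
  then have "card {1..i} \<le> card {i. 1 \<le> i \<and> i \<le> r \<and> k \<le> u i}" by (intro card_mono) auto
  then show "i \<le> transpose_part r u k" by (simp add: transpose_part_def)
next
  assume i: "i \<le> transpose_part r u k"
  show "k \<le> u i"
  proof (rule ccontr)
    assume "\<not> k \<le> u i"
    have "{i. 1 \<le> i \<and> i \<le> r \<and> k \<le> u i} \<subseteq> {1..i-1}"
    proof
      fix x assume x: "x \<in> {i. 1 \<le> i \<and> i \<le> r \<and> k \<le> u i}"
      have "x < i"
      proof (rule ccontr)
        assume "\<not> x < i"
        then have "u x \<le> u i" using assms x unfolding partition_le_def by auto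
        then show False using x \<open>\<not> k \<le> u i\<close> by auto
      qed
      then show "x \<in> {1..i-1}" using x by auto
    qed
    then have "card {i. 1 \<le> i \<and> i \<le> r \<and> k \<le> u i} \<le> card {1..i-1}" by (intro card_mono) auto
    then show False using i assms(2) by (simp add: transpose_part_def)
  qed
qed

theorem lemma5p7:
  fixes d r :: nat and w :: "nat \<Rightarrow> int" and u :: "nat \<Rightarrow> nat"
  assumes "1 \<le> r" and "r < d"
    and "gen_partition r w"
    and "partition_le r u" and "u 1 \<le> d - r"
    and "diagram r (chi r u) \<subseteq> diagram r w"
    and "admissible d (concat_seq r w (transpose_part r u))"
  defines "ut \<equiv> transpose_part r u"
    and "\<Sigma> \<equiv> skew_diagram r w (chi r u)"
  defines "\<Sigma>p \<equiv> {(i, j) \<in> \<Sigma>. transpose_ext r u (1 - j) - ereal (of_int (int r + 1 - j))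
                                    > ereal (of_int (w i - int i))}"
    and "\<Sigma>m \<equiv> {(i, j) \<in> \<Sigma>. transpose_ext r u (1 - j) - ereal (of_int (int r + 1 - j))
                                    < ereal (of_int (w i - int i))}"
    and "sp \<equiv> (\<lambda>i. w i + int (card {j \<in> {1..d - r}. w i - int i < int (ut j) - int (r + j)}))"
    and "sm \<equiv> (\<lambda>j. int (ut j) - int (card {i \<in> {1..r}. w i - int i < int (ut j) - int (r + j)}))"
  shows "(\<forall>i \<in> {1..r}. sp i = int (row_count \<Sigma>p i))
       \<and> (\<forall>j \<in> {1..d - r}. sm j = int (col_count (chi_star r ` \<Sigma>m) (int j)))
       \<and> int (inv_count d (concat_seq r w ut)) = int (sum u {1..r}) - int (card \<Sigma>m)"
proof -
  have wmono: "\<And>i j. 1 \<le> i \<Longrightarrow> i \<le> j \<Longrightarrow> j \<le> r \<Longrightarrow> w j \<le> w i"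
    using assms(3) unfolding gen_partition_def by blast
  have umono: "\<And>i j. 1 \<le> i \<Longrightarrow> i \<le> j \<Longrightarrow> j \<le> r \<Longrightarrow> u j \<le> u i"
    using assms(4) unfolding partition_le_def by blast
  have utc: "\<And>i k. 1 \<le> i \<Longrightarrow> i \<le> r \<Longrightarrow> (k \<le> u i) = (i \<le> ut k)"
    using ut_char[OF assms(4)] unfolding ut_def by blast
  have utle: "\<And>k. ut k \<le> r" unfolding ut_def by (rule ut_le)
  have utanti: "\<And>k k'. k \<le> k' \<Longrightarrow> ut k' \<le> ut k" unfolding ut_def by (rule ut_anti)
  have chile: "- int (u (r+1-i)) \<le> w i" if "1 \<le> i" "i \<le> r" for i
  proof -
    have "(i, chi r u i) \<in> diagram r (chi r u)" using that by (simp add: diagram_def)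
    then have "(i, chi r u i) \<in> diagram r w" using assms(6) by blast
    then show ?thesis by (simp add: diagram_def chi_def)
  qed
  have adm: "w i - int i \<noteq> int (ut k) - int (r+k)"
    if "1 \<le> i" "i \<le> r" "1 \<le> k" "k \<le> d - r" for i k
  proof
    assume eq: "w i - int i = int (ut k) - int (r+k)"
    let ?a = "concat_seq r w (transpose_part r u)"
    have "inj_on (\<lambda>k. ?a k - int k) {1..d}" using assms(7) by (simp add: admissible_def)
    moreover have "?a i - int i = ?a (r+k) - int (r+k)"
      using eq that by (simp add: concat_seq_def ut_def)
    moreover have "i \<in> {1..d}" "r + k \<in> {1..d}" using that assms(2) by auto
    ultimately have "i = r + k" by (meson inj_onD)
    then show False using that by simp
  qed
  have memS: "\<And>i j. (i,j) \<in> \<Sigma> \<longleftrightarrow> 1\<le>i \<and> i\<le>r \<and> -int(u(r+1-i)) < j \<and> j \<le> w i"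
    unfolding \<Sigma>_def skew_diagram_def diagram_def chi_def by auto
  have memP: "\<And>i j. (i,j) \<in> \<Sigma>p \<longleftrightarrow> (i,j)\<in>\<Sigma> \<and> (1 \<le> j \<or> w i - int i < int (ut (nat (1-j))) - (int r + 1 - j))"
    unfolding \<Sigma>p_def transpose_ext_def ut_def by auto
  have memM: "\<And>i j. (i,j) \<in> \<Sigma>m \<longleftrightarrow> (i,j)\<in>\<Sigma> \<and> j \<le> 0 \<and> int (ut (nat (1-j))) - (int r + 1 - j) < w i - int i"
    unfolding \<Sigma>m_def transpose_ext_def ut_def by auto
  define K where "K i = {k\<in>{1..d-r}. w i - int i < int (ut k) - int (r+k)}" for i
  have row: "card (K i) \<le> u (r+1-i) \<and> 0 \<le> w i + int (card (K i))
     \<and> {j. (i,j)\<in>\<Sigma>p} = {- int (card (K i))<..w i}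
     \<and> {j. (i,j)\<in>\<Sigma>m} = {- int (u (r+1-i))<..- int (card (K i))}"
    if i1: "1 \<le> i" and i2: "i \<le> r" for i
  proof -
    define m where "m = card (K i)"
    define v where "v = u (r+1-i)"
    have fin: "finite (K i)" unfolding K_def by simp
    have Keq: "K i = {1..m}" unfolding m_def
    proof (rule init_seg[OF fin])
      show "0 \<notin> K i" unfolding K_def by simp
      fix k k' assume "k \<in> K i" "1 \<le> k'" "k' \<le> k"
      then show "k' \<in> K i" unfolding K_def using utanti[of k' k] by auto
    qed
    have Kc: "(k \<le> m) \<longleftrightarrow> (k \<le> d-r \<and> w i - int i < int (ut k) - int (r+k))" if "1 \<le> k" for k
    proof -
      have "k \<in> K i \<longleftrightarrow> k \<le> m" using Keq that by auto
      then show ?thesis unfolding K_def using that by auto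
    qed
    have "u (r+1-i) \<le> u 1" using umono[of 1 "r+1-i"] i1 i2 by auto
    then have vd: "v \<le> d - r" using assms(5) unfolding v_def by linarith
    have wv: "- int v \<le> w i" using chile[OF i1 i2] unfolding v_def .
    have a: "m \<le> v"
    proof (rule ccontr)
      assume "\<not> m \<le> v"
      then have "v+1 \<le> m" by simp
      then have "w i - int i < int (ut (v+1)) - int (r+(v+1))" using Kc[of "v+1"] by simp
      moreover have "\<not> (r+1-i \<le> ut (v+1))" using utc[of "r+1-i" "v+1"] i1 i2 unfolding v_def by auto
      ultimately show False using wv i2 by linarith
    qed
    have b: "0 \<le> w i + int m"
    proof (cases "0 \<le> w i")
      case True then show ?thesis by simp
    next
      case False
      define k0 where "k0 = nat (- w i)"
      have k0: "1 \<le> k0" "int k0 = - w i" using False unfolding k0_def by auto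
      have "k0 \<le> v" using wv k0 by linarith
      then have "r+1-i \<le> ut k0" using utc[of "r+1-i" k0] i1 i2 unfolding v_def by auto
      then have "w i - int i < int (ut k0) - int (r+k0)" using k0 i2 by linarith
      moreover have "k0 \<le> d - r" using \<open>k0 \<le> v\<close> vd by simp
      ultimately have "k0 \<le> m" using Kc[OF k0(1)] by simp
      then show ?thesis using k0 by linarith
    qed
    have c: "{j. (i,j)\<in>\<Sigma>p} = {- int m<..w i}"
    proof (rule set_eqI)
      fix j
      show "j \<in> {j. (i,j)\<in>\<Sigma>p} \<longleftrightarrow> j \<in> {- int m<..w i}"
      proof (cases "1 \<le> j")
        case True
        then show ?thesis using memP memS i1 i2 by auto
      next
        case False
        define k where "k = nat (1 - j)"
        have k: "1 \<le> k" "j = 1 - int k" "nat (1 - j) = k" "int r + 1 - j = int (r + k)"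
          using False unfolding k_def by auto
        have "j \<in> {j. (i,j)\<in>\<Sigma>p} \<longleftrightarrow> k \<le> v \<and> 1 - int k \<le> w i \<and> w i - int i < int (ut k) - int (r+k)"
          using memP memS i1 i2 k unfolding v_def by auto
        also have "\<dots> \<longleftrightarrow> k \<le> m \<and> 1 - int k \<le> w i"
          using Kc[OF k(1)] a vd by auto
        also have "\<dots> \<longleftrightarrow> j \<in> {- int m<..w i}" using k by auto
        finally show ?thesis .
      qed
    qed
    have d: "{j. (i,j)\<in>\<Sigma>m} = {- int v<..- int m}"
    proof (rule set_eqI)
      fix j
      show "j \<in> {j. (i,j)\<in>\<Sigma>m} \<longleftrightarrow> j \<in> {- int v<..- int m}"
      proof (cases "1 \<le> j")
        case True
        then show ?thesis using memM by auto
      next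
        case False
        define k where "k = nat (1 - j)"
        have k: "1 \<le> k" "j = 1 - int k" "nat (1 - j) = k" "int r + 1 - j = int (r + k)"
          using False unfolding k_def by auto
        have "j \<in> {j. (i,j)\<in>\<Sigma>m} \<longleftrightarrow> k \<le> v \<and> 1 - int k \<le> w i \<and> int (ut k) - int (r+k) < w i - int i"
          using memM memS i1 i2 k unfolding v_def by auto
        also have "\<dots> \<longleftrightarrow> k \<le> v \<and> 1 - int k \<le> w i \<and> \<not> k \<le> m"
          using Kc[OF k(1)] vd adm[OF i1 i2 k(1)] by (auto simp: not_less)
        also have "\<dots> \<longleftrightarrow> k \<le> v \<and> \<not> k \<le> m"
          using b by auto
        also have "\<dots> \<longleftrightarrow> j \<in> {- int v<..- int m}" using k by auto
        finally show ?thesis .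
      qed
    qed
    show ?thesis using a b c d unfolding m_def v_def by simp
  qed
  have P1: "\<forall>i \<in> {1..r}. sp i = int (row_count \<Sigma>p i)"
  proof
    fix i assume "i \<in> {1..r}"
    then have i: "1 \<le> i" "i \<le> r" by auto
    have "sp i = w i + int (card (K i))" unfolding sp_def K_def by simp
    moreover have "row_count \<Sigma>p i = nat (w i + int (card (K i)))"
      unfolding row_count_def using row[OF i] by simp
    ultimately show "sp i = int (row_count \<Sigma>p i)" using row[OF i] by simp
  qed
  have P2: "\<forall>j \<in> {1..d - r}. sm j = int (col_count (chi_star r ` \<Sigma>m) (int j))"
  proof
    fix j assume "j \<in> {1..d - r}"
    then have j: "1 \<le> j" "j \<le> d - r" by auto
    define P where "P = {i\<in>{1..r}. int (ut j) - int (r+j) < w i - int i}"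
    define Q where "Q = {i\<in>{1..r}. w i - int i < int (ut j) - int (r+j)}"
    define p where "p = card P"
    have Peq: "P = {1..p}" unfolding p_def
    proof (rule init_seg)
      show "finite P" unfolding P_def by simp
      show "0 \<notin> P" unfolding P_def by simp
      fix k k' assume "k \<in> P" "1 \<le> k'" "k' \<le> k"
      then show "k' \<in> P" unfolding P_def using wmono[of k' k] by auto
    qed
    have "P \<union> Q = {1..r}" unfolding P_def Q_def using adm[OF _ _ j] by fastforce
    moreover have "P \<inter> Q = {}" unfolding P_def Q_def by auto
    ultimately have pq: "p + card Q = r" unfolding p_def
      by (metis card_Un_disjoint card_atLeastAtMost diff_Suc_1 finite_Un finite_atLeastAtMost)
    have "{1..r - ut j} \<subseteq> P"
    proof
      fix i assume "i \<in> {1..r - ut j}"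
      then have i: "1 \<le> i" "i \<le> r - ut j" by auto
      have "\<not> (r+1-i \<le> ut j)" using i utle[of j] by auto
      then have "\<not> j \<le> u (r+1-i)" using utc[of "r+1-i" j] i utle[of j] by auto
      moreover have "- int (u (r+1-i)) \<le> w i" using chile i utle[of j] by auto
      ultimately have "int (ut j) - int (r+j) < w i - int i" using i utle[of j] by linarith
      then show "i \<in> P" unfolding P_def using i by auto
    qed
    then have "card {1..r - ut j} \<le> card P" by (intro card_mono) (auto simp: P_def)
    then have rp: "r - ut j \<le> p" unfolding p_def by simp
    have "card P \<le> card {1..r}" by (intro card_mono) (auto simp: P_def)
    then have pr: "p \<le> r" unfolding p_def by simp
    have C: "{i'. (i', int j) \<in> chi_star r ` \<Sigma>m} = {r+1-p..ut j}"
    proof (rule set_eqI, rule iffI)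
      fix i' assume "i' \<in> {i'. (i', int j) \<in> chi_star r ` \<Sigma>m}"
      then obtain a b where ab: "(a,b) \<in> \<Sigma>m" "(i', int j) = chi_star r (a,b)" by auto
      then have e: "i' = r + 1 - a" "b = 1 - int j" by (auto simp: chi_star_def)
      have nj: "nat (1 - b) = j" "int r + 1 - b = int (r + j)" using e by auto
      have a: "1 \<le> a" "a \<le> r" "- int (u (r+1-a)) < b" "int (ut j) - int (r+j) < w a - int a"
        using ab(1) memM memS nj by auto
      have "a \<in> P" unfolding P_def using a by auto
      then have "a \<le> p" using Peq by auto
      moreover have "j \<le> u i'" using a e by auto
      then have "i' \<le> ut j" using utc[of i' j] a e by auto
      ultimately show "i' \<in> {r+1-p..ut j}" using e a by auto
    next
      fix i' assume "i' \<in> {r+1-p..ut j}"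
      then have i': "r+1-p \<le> i'" "i' \<le> ut j" by auto
      define a where "a = r + 1 - i'"
      have i'1: "1 \<le> i'" "i' \<le> r" using i' pr utle[of j] by auto
      have a: "1 \<le> a" "a \<le> r" "a \<le> p" "i' = r + 1 - a" using i' i'1 unfolding a_def by auto
      have "a \<in> P" using Peq a by auto
      then have wa: "int (ut j) - int (r+j) < w a - int a" unfolding P_def by auto
      have ju: "j \<le> u i'" using utc[of i' j] i'1 i' by auto
      have "(a, 1 - int j) \<in> \<Sigma>m"
        unfolding memM memS using a wa ju i' j by auto
      moreover have "chi_star r (a, 1 - int j) = (i', int j)" using a by (simp add: chi_star_def)
      ultimately show "i' \<in> {i'. (i', int j) \<in> chi_star r ` \<Sigma>m}" by force
    qed
    have "col_count (chi_star r ` \<Sigma>m) (int j) = ut j + 1 - (r + 1 - p)"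
      unfolding col_count_def C by simp
    moreover have "sm j = int (ut j) - int (card Q)" unfolding sm_def Q_def by simp
    ultimately show "sm j = int (col_count (chi_star r ` \<Sigma>m) (int j))" using pq rp pr by auto
  qed
  define a where "a = concat_seq r w ut"
  have Ieq: "{(i, j). 1 \<le> i \<and> i < j \<and> j \<le> d \<and> a i - int i < a j - int j}
      = Sigma {1..r} (\<lambda>i. (\<lambda>k. r + k) ` K i)"
  proof (rule set_eqI, rule iffI)
    fix x assume "x \<in> {(i, j). 1 \<le> i \<and> i < j \<and> j \<le> d \<and> a i - int i < a j - int j}"
    then obtain i j where x: "x = (i,j)" "1 \<le> i" "i < j" "j \<le> d" "a i - int i < a j - int j" by auto
    have ir: "i \<le> r"
    proof (rule ccontr)
      assume "\<not> i \<le> r"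
      then have "a i = int (ut (i - r))" "a j = int (ut (j - r))" using x unfolding a_def concat_seq_def by auto
      moreover have "ut (j - r) \<le> ut (i - r)" using utanti x by simp
      ultimately show False using x by linarith
    qed
    have jr: "r < j"
    proof (rule ccontr)
      assume "\<not> r < j"
      then have "a i = w i" "a j = w j" using x ir unfolding a_def concat_seq_def by auto
      moreover have "w j \<le> w i" using wmono x \<open>\<not> r < j\<close> by simp
      ultimately show False using x by linarith
    qed
    define k where "k = j - r"
    have "a j = int (ut k)" "j = r + k" using jr unfolding a_def concat_seq_def k_def by auto
    moreover have "a i = w i" using ir unfolding a_def concat_seq_def by auto
    ultimately have "k \<in> K i" unfolding K_def using x jr by auto
    then show "x \<in> Sigma {1..r} (\<lambda>i. (\<lambda>k. r + k) ` K i)" using x ir \<open>j = r + k\<close> by auto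
  next
    fix x assume "x \<in> Sigma {1..r} (\<lambda>i. (\<lambda>k. r + k) ` K i)"
    then obtain i k where x: "x = (i, r+k)" "1 \<le> i" "i \<le> r" "k \<in> K i" by auto
    then have "1 \<le> k" "k \<le> d - r" "w i - int i < int (ut k) - int (r+k)" unfolding K_def by auto
    moreover have "a i = w i" "a (r+k) = int (ut k)" using x \<open>1 \<le> k\<close> unfolding a_def concat_seq_def by auto
    ultimately show "x \<in> {(i, j). 1 \<le> i \<and> i < j \<and> j \<le> d \<and> a i - int i < a j - int j}"
      using x by auto
  qed
  have finK: "\<And>i. finite (K i)" unfolding K_def by simp
  have inv: "inv_count d a = (\<Sum>i\<in>{1..r}. card (K i))"
    unfolding inv_count_def Ieq using finK
    by (simp add: card_SigmaI card_image)
  have Meq: "\<Sigma>m = Sigma {1..r} (\<lambda>i. {j. (i,j)\<in>\<Sigma>m})"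
    using memM memS by auto
  have "card \<Sigma>m = (\<Sum>i\<in>{1..r}. card {j. (i,j)\<in>\<Sigma>m})"
    by (subst Meq, rule card_SigmaI) (use row in auto)
  then have cM: "int (card \<Sigma>m) = (\<Sum>i\<in>{1..r}. int (u (r+1-i)) - int (card (K i)))"
    using row by (simp add: of_nat_sum)
  have su: "sum u {1..r} = (\<Sum>i\<in>{1..r}. u (r+1-i))"
    using sum.atLeastAtMost_rev[of u 1 r] by simp
  have P3: "int (inv_count d (concat_seq r w ut)) = int (sum u {1..r}) - int (card \<Sigma>m)"
    unfolding a_def[symmetric] inv cM su by (simp add: of_nat_sum sum_subtractf)
  show ?thesis using P1 P2 P3 by blast
qed

end
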